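(* Let $q_{12},q_{13}\in\mathbb{H}$ with $k=|q_{12}|^2+|q_{13}|^2>0$, and let $\tilde A=\begin{pmatrix}0&q_{12}&q_{13}\\0&1&0\\0&0&1\end{pmatrix}$. Then $W(\tilde A)=\bigcup_{d\in[0,1]}\mathbb{D}_{\mathbb{H}}\big(d,\sqrt{kd(1-d)}\big)$, and, identifying $\mathbb{C}=\mathbb{R}+\mathbb{R}i\subset\mathbb{H}$ with $\mathbb{R}^2$ via $x+yi\mapsto(x,y)$, $$W(\tilde A)\cap\mathbb{C}=\bigcup_{d\in[0,1]}\mathbb{D}_{\mathbb{C}}\big(d,\sqrt{kd(1-d)}\big)=\Big\{(x,y)\in\mathbb{R}^2:\ \frac{(x-\frac12)^2}{\frac{k+1}{4}}+\frac{y^2}{\frac{k}{4}}\le1\Big\}.$$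
   Context: $\mathbb{H}$ denotes the real quaternions, $|q|^2=qq^*$. The numerical range of $A\in\mathcal{M}_n(\mathbb{H})$ is $W(A)=\{\mathbf{x}^*A\mathbf{x}:\mathbf{x}\in\mathbb{H}^n,\ \mathbf{x}^*\mathbf{x}=1\}$. $\mathbb{D}_{\mathbb{H}}(c,r)=\{q\in\mathbb{H}:|q-c|\le r\}$ and $\mathbb{D}_{\mathbb{C}}(c,r)=\{z\in\mathbb{C}:|z-c|\le r\}$. *)

theory Defs
  imports "HOL-Analysis.Analysis"
begin

datatype quat = Quat (qre: real) (qi: real) (qj: real) (qk: real)

instantiation quat :: "{zero, one, plus, minus, uminus, times}"
begin
definition "0 = Quat 0 0 0 0"
definition "1 = Quat 1 0 0 0"
definition "p + q = Quat (qre p + qre q) (qi p + qi q) (qj p + qj q) (qk p + qk q)"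
definition "p - q = Quat (qre p - qre q) (qi p - qi q) (qj p - qj q) (qk p - qk q)"
definition "- q = Quat (- qre q) (- qi q) (- qj q) (- qk q)"
definition "p * q = Quat
   (qre p * qre q - qi p * qi q - qj p * qj q - qk p * qk q)
   (qre p * qi q + qi p * qre q + qj p * qk q - qk p * qj q)
   (qre p * qj q - qi p * qk q + qj p * qre q + qk p * qi q)
   (qre p * qk q + qi p * qj q - qj p * qi q + qk p * qre q)"
instance ..
end

instance quat :: comm_monoid_add
  by standard (simp_all add: plus_quat_def zero_quat_def algebra_simps)

definition qcnj :: "quat \<Rightarrow> quat" where
  "qcnj q = Quat (qre q) (- qi q) (- qj q) (- qk q)"

definition qnorm :: "quat \<Rightarrow> real" where
  "qnorm q = sqrt ((qre q)\<^sup>2 + (qi q)\<^sup>2 + (qj q)\<^sup>2 + (qk q)\<^sup>2)"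

definition quat_of_real :: "real \<Rightarrow> quat" where
  "quat_of_real r = Quat r 0 0 0"

definition quat_of_complex :: "complex \<Rightarrow> quat" where
  "quat_of_complex z = Quat (Re z) (Im z) 0 0"

definition num_range :: "nat \<Rightarrow> (nat \<Rightarrow> nat \<Rightarrow> quat) \<Rightarrow> quat set" where
  "num_range n A = {(\<Sum>i<n. \<Sum>j<n. qcnj (x i) * A i j * x j) | x :: nat \<Rightarrow> quat.
      (\<Sum>i<n. qcnj (x i) * x i) = 1}"

definition qdisc :: "quat \<Rightarrow> real \<Rightarrow> quat set" where
  "qdisc c r = {q. qnorm (q - c) \<le> r}"

definition cdisc :: "complex \<Rightarrow> real \<Rightarrow> complex set" where
  "cdisc c r = {z. cmod (z - c) \<le> r}"

text \<open>The matrix [[0,q12,q13],[0,1,0],[0,0,1]] (indices 0,1,2).\<close>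
definition Atilde :: "quat \<Rightarrow> quat \<Rightarrow> nat \<Rightarrow> nat \<Rightarrow> quat" where
  "Atilde q12 q13 i j =
     (if i = 0 \<and> j = 1 then q12
      else if i = 0 \<and> j = 2 then q13
      else if i = j \<and> (i = 1 \<or> i = 2) then 1
      else 0)"

end

theory Submission
  imports Defs
begin


lemma qc[simp]:
  "qre (p*q) = qre p * qre q - qi p * qi q - qj p * qj q - qk p * qk q"
  "qi (p*q) = qre p * qi q + qi p * qre q + qj p * qk q - qk p * qj q"
  "qj (p*q) = qre p * qj q - qi p * qk q + qj p * qre q + qk p * qi q"
  "qk (p*q) = qre p * qk q + qi p * qj q - qj p * qi q + qk p * qre q"
  "qre (p+q) = qre p + qre q" "qi (p+q) = qi p + qi q" "qj (p+q) = qj p + qj q" "qk (p+q) = qk p + qk q"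
  "qre (p-q) = qre p - qre q" "qi (p-q) = qi p - qi q" "qj (p-q) = qj p - qj q" "qk (p-q) = qk p - qk q"
  "qre 0 = 0" "qi 0 = 0" "qj 0 = 0" "qk 0 = 0"
  "qre 1 = 1" "qi 1 = 0" "qj 1 = 0" "qk 1 = 0"
  "qre (qcnj q) = qre q" "qi (qcnj q) = - qi q" "qj (qcnj q) = - qj q" "qk (qcnj q) = - qk q"
  "qre (quat_of_real r) = r" "qi (quat_of_real r) = 0" "qj (quat_of_real r) = 0" "qk (quat_of_real r) = 0"
  "qre (- q) = - qre q" "qi (- q) = - qi q" "qj (- q) = - qj q" "qk (- q) = - qk q"
  "qre (quat_of_complex z) = Re z" "qi (quat_of_complex z) = Im z" "qj (quat_of_complex z) = 0" "qk (quat_of_complex z) = 0"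
  by (simp_all add: times_quat_def plus_quat_def minus_quat_def zero_quat_def one_quat_def
      qcnj_def quat_of_real_def quat_of_complex_def uminus_quat_def)

lemma quat_eqI: "qre p = qre q \<Longrightarrow> qi p = qi q \<Longrightarrow> qj p = qj q \<Longrightarrow> qk p = qk q \<Longrightarrow> p = q"
  using quat.expand by blast

definition nsq :: "quat \<Rightarrow> real" where
  "nsq q = (qre q)\<^sup>2 + (qi q)\<^sup>2 + (qj q)\<^sup>2 + (qk q)\<^sup>2"

lemma nsq_nonneg: "nsq q \<ge> 0" unfolding nsq_def by simp

lemma qnorm_nsq: "qnorm q = sqrt (nsq q)" unfolding qnorm_def nsq_def ..

lemma qnorm_sq: "(qnorm q)\<^sup>2 = nsq q" by (simp add: qnorm_nsq nsq_nonneg)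

lemma qnorm_nonneg: "qnorm q \<ge> 0" by (simp add: qnorm_nsq nsq_nonneg)

lemma nsq_mult: "nsq (p*q) = nsq p * nsq q"
  unfolding nsq_def by simp algebra

lemma qnorm_mult: "qnorm (p*q) = qnorm p * qnorm q"
  by (simp add: qnorm_nsq nsq_mult real_sqrt_mult)

lemma qnorm_cnj: "qnorm (qcnj q) = qnorm q"
  by (simp add: qnorm_def)

definition qv :: "quat \<Rightarrow> complex \<times> complex" where
  "qv q = (Complex (qre q) (qi q), Complex (qj q) (qk q))"

lemma qnorm_qv: "qnorm q = norm (qv q)"
  by (simp add: qv_def norm_Pair cmod_power2 qnorm_def add.assoc)

lemma qv_add: "qv (p+q) = qv p + qv q"
  by (simp add: qv_def complex_eq_iff)

lemma qnorm_triangle: "qnorm (p+q) \<le> qnorm p + qnorm q"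
  by (simp add: qnorm_qv qv_add norm_triangle_ineq)


instance quat :: ring_1
proof
  fix a b c :: quat
  show "a * b * c = a * (b * c)" by (rule quat_eqI) (simp_all add: algebra_simps)
  show "1 * a = a" by (rule quat_eqI) simp_all
  show "a * 1 = a" by (rule quat_eqI) simp_all
  show "(a + b) * c = a * c + b * c" by (rule quat_eqI) (simp_all add: algebra_simps)
  show "a * (b + c) = a * b + a * c" by (rule quat_eqI) (simp_all add: algebra_simps)
  show "- a + a = 0" by (rule quat_eqI) simp_all
  show "a - b = a + - b" by (rule quat_eqI) simp_all
  show "(0::quat) \<noteq> 1" by (metis qc(13) qc(17) zero_neq_one)
qed

lemma qr_mult_comm: "quat_of_real c * q = q * quat_of_real c"
  by (rule quat_eqI) simp_all

lemma qr_mult: "quat_of_real a * quat_of_real b = quat_of_real (a*b)"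
  by (rule quat_eqI) simp_all

lemma qr_add: "quat_of_real a + quat_of_real b = quat_of_real (a+b)"
  by (rule quat_eqI) simp_all

lemma qr_0: "quat_of_real 0 = 0" and qr_1: "quat_of_real 1 = 1"
  by (rule quat_eqI; simp)+

lemma nsq_qr_mult: "nsq (quat_of_real c * q) = c\<^sup>2 * nsq q"
  unfolding nsq_def by simp algebra

lemma nsq_qr: "nsq (quat_of_real c) = c\<^sup>2"
  unfolding nsq_def by simp

lemma nsq_uminus: "nsq (- q) = nsq q"
  unfolding nsq_def by simp

lemma nsq_cnj: "nsq (qcnj q) = nsq q"
  unfolding nsq_def by simp

lemma nsq_zero_iff: "nsq q = 0 \<longleftrightarrow> q = 0"
proof
  assume "nsq q = 0"
  hence "qre q = 0 \<and> qi q = 0 \<and> qj q = 0 \<and> qk q = 0"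
    unfolding nsq_def by (simp add: add_nonneg_eq_0_iff)
  thus "q = 0" by (intro quat_eqI) auto
qed (simp add: nsq_def)

definition ip :: "quat \<Rightarrow> quat \<Rightarrow> real" where
  "ip p q = qre p * qre q + qi p * qi q + qj p * qj q + qk p * qk q"

lemma nsq_add: "nsq (p + q) = nsq p + nsq q + 2 * ip p q"
  unfolding nsq_def ip_def by simp algebra

lemma ip_add2: "ip p (a + b) = ip p a + ip p b"
  unfolding ip_def by simp algebra

lemma ip_zero2: "ip p 0 = 0" unfolding ip_def by simp

lemma ip_qr1: "ip (quat_of_real c * p) q = c * ip p q"
  unfolding ip_def by simp algebra

lemma ip_qr2: "ip p (quat_of_real c * q) = c * ip p q"
  unfolding ip_def by simp algebra

lemma ip_adj: "ip (qcnj a * v) z = ip v (a * z)"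
  unfolding ip_def by simp algebra

lemma cnj_mult_self: "q * (qcnj q * v) = quat_of_real (nsq q) * v"
  unfolding nsq_def by (rule quat_eqI) (simp_all, algebra+)

lemma kern: "\<exists>z1 z2. nsq z1 + nsq z2 = 1 \<and> q12 * z1 + q13 * z2 = 0"
proof (cases "q12 = 0")
  case True
  show ?thesis by (rule exI[of _ 1], rule exI[of _ 0]) (simp add: True nsq_def)
next
  case False
  define w1 where "w1 = qcnj q12 * q13"
  define w2 where "w2 = - quat_of_real (nsq q12)"
  define N where "N = nsq w1 + nsq w2"
  have n12: "nsq q12 > 0" using False nsq_zero_iff nsq_nonneg by (metis less_eq_real_def)
  have "nsq w2 = (nsq q12)\<^sup>2" unfolding w2_def nsq_uminus nsq_qr ..
  moreover have "(nsq q12)\<^sup>2 > 0" using n12 by simp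
  ultimately have Npos: "N > 0" unfolding N_def using nsq_nonneg[of w1] by linarith
  have ker: "q12 * w1 + q13 * w2 = 0"
    unfolding w1_def w2_def cnj_mult_self by (simp add: qr_mult_comm)
  define c where "c = 1 / sqrt N"
  have c2: "c\<^sup>2 * N = 1" using Npos by (simp add: c_def power_divide)
  show ?thesis
  proof (intro exI conjI)
    show "nsq (quat_of_real c * w1) + nsq (quat_of_real c * w2) = 1"
      using c2 unfolding nsq_qr_mult N_def by (simp add: distrib_left)
    have "q12 * (quat_of_real c * w1) + q13 * (quat_of_real c * w2) = quat_of_real c * (q12 * w1 + q13 * w2)"
      by (metis distrib_left mult.assoc qr_mult_comm)
    then show "q12 * (quat_of_real c * w1) + q13 * (quat_of_real c * w2) = 0"
      using ker by simp
  qed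
qed




lemma qr_comm_in: "q * (quat_of_real c * w) = quat_of_real c * (q * w)"
  by (metis mult.assoc qr_mult_comm)

lemma solve:
  assumes k: "k = nsq q12 + nsq q13" "k > 0" and d: "d \<ge> 0" and v: "nsq v \<le> k * d"
  shows "\<exists>x1 x2. nsq x1 + nsq x2 = d \<and> q12 * x1 + q13 * x2 = v"
proof -
  obtain z1 z2 where z1: "nsq z1 + nsq z2 = 1" and z2: "q12 * z1 + q13 * z2 = 0"
    using kern by blast
  define p1 where "p1 = quat_of_real (1/k) * (qcnj q12 * v)"
  define p2 where "p2 = quat_of_real (1/k) * (qcnj q13 * v)"
  have le: "nsq v / k \<le> d" using v k(2) by (simp add: pos_divide_le_eq mult.commute)
  define t where "t = sqrt (d - nsq v / k)"
  have t2: "t\<^sup>2 = d - nsq v / k" unfolding t_def using le by simp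
  have ip0: "ip p1 z1 + ip p2 z2 = 0"
  proof -
    have "ip p1 z1 + ip p2 z2 = (1/k) * ip v (q12 * z1 + q13 * z2)"
      unfolding p1_def p2_def ip_qr1 ip_adj ip_add2 by (simp add: distrib_left)
    also have "\<dots> = 0" using z2 by (simp add: ip_zero2)
    finally show ?thesis .
  qed
  have np: "nsq p1 + nsq p2 = nsq v / k"
  proof -
    have "nsq p1 + nsq p2 = (1/k)\<^sup>2 * ((nsq q12 + nsq q13) * nsq v)"
      unfolding p1_def p2_def nsq_qr_mult
      unfolding nsq_mult nsq_cnj by (simp only: distrib_right distrib_left)
    also have "\<dots> = (1/k)\<^sup>2 * (k * nsq v)" by (simp only: k(1))
    also have "\<dots> = nsq v / k" using k(2) by (simp add: power2_eq_square)
    finally show ?thesis .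
  qed
  have sol: "q12 * p1 + q13 * p2 = v"
  proof -
    have "q12 * p1 + q13 * p2 = quat_of_real (1/k) * (quat_of_real (nsq q12 + nsq q13) * v)"
      unfolding p1_def p2_def qr_comm_in[of q12] qr_comm_in[of q13] cnj_mult_self
      by (simp only: distrib_left distrib_right qr_add[symmetric])
    also have "\<dots> = quat_of_real (1/k) * (quat_of_real k * v)" by (simp only: k(1))
    also have "\<dots> = quat_of_real (1/k * k) * v" by (simp only: mult.assoc[symmetric] qr_mult)
    also have "\<dots> = v" using k(2) by (simp add: qr_1)
    finally show ?thesis .
  qed
  show ?thesis
  proof (intro exI conjI)
    show "nsq (p1 + quat_of_real t * z1) + nsq (p2 + quat_of_real t * z2) = d"
    proof -
      have "nsq (p1 + quat_of_real t * z1) + nsq (p2 + quat_of_real t * z2)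
          = (nsq p1 + nsq p2) + t\<^sup>2 * (nsq z1 + nsq z2) + 2 * t * (ip p1 z1 + ip p2 z2)"
        unfolding nsq_add nsq_qr_mult ip_qr2 by (simp add: algebra_simps)
      also have "\<dots> = d" using np t2 z1 ip0 by simp
      finally show ?thesis .
    qed
    show "q12 * (p1 + quat_of_real t * z1) + q13 * (p2 + quat_of_real t * z2) = v"
    proof -
      have "q12 * (p1 + quat_of_real t * z1) + q13 * (p2 + quat_of_real t * z2)
          = (q12 * p1 + q13 * p2) + quat_of_real t * (q12 * z1 + q13 * z2)"
        unfolding distrib_left qr_comm_in[of q12] qr_comm_in[of q13] by (simp add: algebra_simps)
      thus ?thesis using sol z2 by simp
    qed
  qed
qed


lemma cnj_self: "qcnj q * q = quat_of_real (nsq q)"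
  unfolding nsq_def by (rule quat_eqI) (simp_all add: power2_eq_square)

lemma qr_eq_1: "quat_of_real a = 1 \<longleftrightarrow> a = 1"
  by (metis qc(17) qc(25) qr_1)

lemma S_eq: "(\<Sum>i<3. \<Sum>j<3. qcnj (x i) * Atilde q12 q13 i j * x j)
   = qcnj (x 0) * (q12 * x 1 + q13 * x 2) + quat_of_real (nsq (x 1) + nsq (x 2))"
proof -
  have "(\<Sum>i<3. \<Sum>j<3. qcnj (x i) * Atilde q12 q13 i j * x j)
     = qcnj (x 0) * q12 * x 1 + qcnj (x 0) * q13 * x 2 + qcnj (x 1) * x 1 + qcnj (x 2) * x 2"
    by (simp add: numeral_3_eq_3 numeral_2_eq_2 Atilde_def add_ac)
  also have "\<dots> = qcnj (x 0) * (q12 * x 1 + q13 * x 2) + quat_of_real (nsq (x 1) + nsq (x 2))"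
    by (simp only: cnj_self qr_add[symmetric] distrib_left mult.assoc add.assoc)
  finally show ?thesis .
qed

lemma N_eq: fixes x :: "nat \<Rightarrow> quat" shows "(\<Sum>i<3. qcnj (x i) * x i) = quat_of_real (nsq (x 0) + nsq (x 1) + nsq (x 2))"
  by (simp add: numeral_3_eq_3 numeral_2_eq_2 cnj_self qr_add add_ac)

lemma fwd:
  assumes k: "k = nsq q12 + nsq q13" and n: "nsq x0 + nsq x1 + nsq x2 = 1"
  shows "qnorm (qcnj x0 * (q12 * x1 + q13 * x2) + quat_of_real (nsq x1 + nsq x2)
            - quat_of_real (nsq x1 + nsq x2))
         \<le> sqrt (k * (nsq x1 + nsq x2) * (1 - (nsq x1 + nsq x2)))"
proof -
  define d where "d = nsq x1 + nsq x2"
  define v where "v = q12 * x1 + q13 * x2"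
  have "qnorm v \<le> qnorm q12 * qnorm x1 + qnorm q13 * qnorm x2"
    unfolding v_def using qnorm_triangle[of "q12 * x1" "q13 * x2"] by (simp add: qnorm_mult)
  moreover have "(qnorm q12 * qnorm x1 + qnorm q13 * qnorm x2)\<^sup>2 \<le> k * d"
  proof -
    have "(qnorm q12 * qnorm x1 + qnorm q13 * qnorm x2)\<^sup>2 \<le>
          ((qnorm q12)\<^sup>2 + (qnorm q13)\<^sup>2) * ((qnorm x1)\<^sup>2 + (qnorm x2)\<^sup>2)"
      using zero_le_power2[of "qnorm q12 * qnorm x2 - qnorm q13 * qnorm x1"]
      by (simp add: power2_eq_square algebra_simps)
    thus ?thesis unfolding k d_def qnorm_sq .
  qed
  ultimately have vle: "qnorm v \<le> sqrt (k * d)"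
    by (meson add_nonneg_nonneg mult_nonneg_nonneg qnorm_nonneg real_le_rsqrt order_trans)
  have x0: "qnorm (qcnj x0) = sqrt (1 - d)"
    unfolding qnorm_cnj qnorm_nsq d_def using n by (simp add: algebra_simps nsq_cnj)
  have "qnorm (qcnj x0 * v + quat_of_real d - quat_of_real d) = sqrt (1 - d) * qnorm v"
    by (simp add: qnorm_mult x0)
  also have "\<dots> \<le> sqrt (1 - d) * sqrt (k * d)"
    using n nsq_nonneg[of x0] by (intro mult_left_mono[OF vle]) (simp add: d_def)
  also have "\<dots> = sqrt (k * d * (1 - d))" by (simp add: real_sqrt_mult[symmetric] mult_ac)
  finally show ?thesis unfolding d_def v_def .
qed

lemma bwd:
  assumes k: "k = nsq q12 + nsq q13" "k > 0" and d: "0 \<le> d" "d \<le> 1"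
    and q: "qnorm (q - quat_of_real d) \<le> sqrt (k * d * (1 - d))"
  shows "\<exists>x::nat\<Rightarrow>quat. nsq (x 0) + nsq (x 1) + nsq (x 2) = 1 \<and>
           q = qcnj (x 0) * (q12 * x 1 + q13 * x 2) + quat_of_real (nsq (x 1) + nsq (x 2))"
proof -
  define r where "r = q - quat_of_real d"
  have kd: "k * d * (1 - d) \<ge> 0" using k(2) d by simp
  have nr: "nsq r \<le> k * d * (1 - d)"
  proof -
    have "(qnorm r)\<^sup>2 \<le> (sqrt (k * d * (1 - d)))\<^sup>2"
      using q unfolding r_def by (intro power_mono) (simp_all add: qnorm_nonneg)
    thus ?thesis using kd by (simp add: qnorm_sq)
  qed
  define s where "s = sqrt (1 - d)"
  define v where "v = quat_of_real (1 / s) * r"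
  have nv: "nsq v \<le> k * d"
  proof (cases "d = 1")
    case True
    then show ?thesis using k(2) by (simp add: v_def s_def nsq_qr_mult)
  next
    case False
    hence "1 - d > 0" using d by simp
    hence "nsq v = nsq r / (1 - d)" unfolding v_def s_def nsq_qr_mult by (simp add: power_divide)
    also have "\<dots> \<le> k * d" using nr \<open>1 - d > 0\<close> by (simp add: pos_divide_le_eq)
    finally show ?thesis .
  qed
  obtain x1 x2 where x12: "nsq x1 + nsq x2 = d" "q12 * x1 + q13 * x2 = v"
    using solve[OF k d(1) nv] by blast
  have rv: "quat_of_real s * v = r"
  proof (cases "d = 1")
    case True
    hence "nsq r \<le> 0" using nr by simp
    hence "r = 0" using nsq_nonneg[of r] nsq_zero_iff by (metis antisym)
    then show ?thesis by (simp add: v_def)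
  next
    case False
    hence "s \<noteq> 0" using d unfolding s_def by simp
    hence "quat_of_real s * v = quat_of_real (s * (1/s)) * r"
      unfolding v_def by (simp only: mult.assoc[symmetric] qr_mult)
    also have "\<dots> = r" using \<open>s \<noteq> 0\<close> by (simp add: qr_1)
    finally show ?thesis .
  qed
  define x where "x = (\<lambda>i::nat. if i = 0 then quat_of_real s else if i = 1 then x1 else x2)"
  show ?thesis
  proof (rule exI[of _ x], intro conjI)
    show "nsq (x 0) + nsq (x 1) + nsq (x 2) = 1"
      unfolding x_def using x12(1) d by (simp add: nsq_qr s_def)
    have c: "qcnj (quat_of_real s) = quat_of_real s" by (rule quat_eqI) simp_all
    show "q = qcnj (x 0) * (q12 * x 1 + q13 * x 2) + quat_of_real (nsq (x 1) + nsq (x 2))"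
      unfolding x_def using x12 rv c by (simp add: r_def)
  qed
qed


lemma qnorm_qoc: "qnorm (quat_of_complex z - quat_of_real d) = cmod (z - complex_of_real d)"
proof -
  have "qv (quat_of_complex z - quat_of_real d) = (z - complex_of_real d, 0)"
    by (simp add: qv_def complex_eq_iff)
  thus ?thesis by (simp add: qnorm_qv)
qed

lemma cdisc_iff:
  assumes "k > 0" "0 \<le> d" "d \<le> 1"
  shows "z \<in> cdisc (complex_of_real d) (sqrt (k * d * (1 - d))) \<longleftrightarrow>
         (Re z - d)\<^sup>2 + (Im z)\<^sup>2 \<le> k * d * (1 - d)"
proof -
  have "cmod (z - complex_of_real d) = sqrt ((Re z - d)\<^sup>2 + (Im z)\<^sup>2)"
    by (simp add: cmod_def)
  thus ?thesis unfolding cdisc_def by simp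
qed

lemma ell:
  fixes x y k :: real
  assumes k: "k > 0"
  shows "(\<exists>d\<in>{0..1}. (x - d)\<^sup>2 + y\<^sup>2 \<le> k * d * (1 - d)) \<longleftrightarrow>
         (x - 1/2)\<^sup>2 / ((k + 1) / 4) + y\<^sup>2 / (k / 4) \<le> 1"
proof -
  define E where "E = 4 * k * (x - 1/2)\<^sup>2 + 4 * (1 + k) * y\<^sup>2 - k * (k + 1)"
  have iden: "4 * (1 + k) * ((x - d)\<^sup>2 + y\<^sup>2 - k * d * (1 - d)) = (2 * (1 + k) * d - 2 * x - k)\<^sup>2 + E" for d
    unfolding E_def by (simp add: power2_eq_square algebra_simps)
  have "(x - 1/2)\<^sup>2 / ((k + 1) / 4) + y\<^sup>2 / (k / 4)
        = (4 * k * (x - 1/2)\<^sup>2 + 4 * (1 + k) * y\<^sup>2) / (k * (k + 1))"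
    using k by (simp add: field_simps)
  also have "\<dots> \<le> 1 \<longleftrightarrow> E \<le> 0"
    using k unfolding E_def by (simp add: pos_divide_le_eq)
  finally have eE: "(x - 1/2)\<^sup>2 / ((k + 1) / 4) + y\<^sup>2 / (k / 4) \<le> 1 \<longleftrightarrow> E \<le> 0" .
  show ?thesis
  proof
    assume "\<exists>d\<in>{0..1}. (x - d)\<^sup>2 + y\<^sup>2 \<le> k * d * (1 - d)"
    then obtain d where "(x - d)\<^sup>2 + y\<^sup>2 \<le> k * d * (1 - d)" by blast
    hence "4 * (1 + k) * ((x - d)\<^sup>2 + y\<^sup>2 - k * d * (1 - d)) \<le> 0"
      using k by (intro mult_nonneg_nonpos) simp_all
    hence "E \<le> 0" unfolding iden using zero_le_power2[of "2 * (1 + k) * d - 2 * x - k"] by linarith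
    thus "(x - 1/2)\<^sup>2 / ((k + 1) / 4) + y\<^sup>2 / (k / 4) \<le> 1" using eE by simp
  next
    assume "(x - 1/2)\<^sup>2 / ((k + 1) / 4) + y\<^sup>2 / (k / 4) \<le> 1"
    hence E: "E \<le> 0" using eE by simp
    define d where "d = (2 * x + k) / (2 * (1 + k))"
    have dd: "2 * (1 + k) * d = 2 * x + k" unfolding d_def using k by simp
    have i1: "k * (2 * x - 1)\<^sup>2 = 4 * k * (x - 1/2)\<^sup>2" by (simp add: power2_eq_square algebra_simps)
    have i2: "4 * (1 + k) * y\<^sup>2 \<ge> 0" using k by simp
    have "k * (2 * x - 1)\<^sup>2 \<le> k * (k + 1)"
      using E i1 i2 unfolding E_def by linarith
    hence "(2 * x - 1)\<^sup>2 \<le> k + 1" using k by simp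
    also have "\<dots> \<le> (k + 1)\<^sup>2" using k by (simp add: power2_eq_square)
    finally have "\<bar>2 * x - 1\<bar> \<le> \<bar>k + 1\<bar>" by (simp add: abs_le_square_iff)
    hence bx: "- k \<le> 2 * x" "2 * x \<le> k + 2" using k by auto
    have d01: "d \<in> {0..1}" unfolding d_def using k bx by (simp add: divide_le_eq)
    have "4 * (1 + k) * ((x - d)\<^sup>2 + y\<^sup>2 - k * d * (1 - d)) \<le> 0"
      unfolding iden dd using E by simp
    hence "(x - d)\<^sup>2 + y\<^sup>2 - k * d * (1 - d) \<le> 0"
      using k by (simp add: mult_le_0_iff)
    thus "\<exists>d\<in>{0..1}. (x - d)\<^sup>2 + y\<^sup>2 \<le> k * d * (1 - d)" using d01 by auto
  qed
qed

theorem mainTheorem8: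
  fixes q12 q13 :: quat and k :: real
  assumes hk: "k = (qnorm q12)\<^sup>2 + (qnorm q13)\<^sup>2" and kpos: "k > 0"
  shows "num_range 3 (Atilde q12 q13) =
           (\<Union>d\<in>{0..1::real}. qdisc (quat_of_real d) (sqrt (k * d * (1 - d))))
       \<and> num_range 3 (Atilde q12 q13) \<inter> range quat_of_complex =
           quat_of_complex ` (\<Union>d\<in>{0..1::real}. cdisc (complex_of_real d) (sqrt (k * d * (1 - d))))
       \<and> (\<Union>d\<in>{0..1::real}. cdisc (complex_of_real d) (sqrt (k * d * (1 - d)))) =
           {Complex x y | x y. (x - 1/2)\<^sup>2 / ((k + 1) / 4) + y\<^sup>2 / (k / 4) \<le> 1}"
proof -
  have k: "k = nsq q12 + nsq q13" using hk by (simp add: qnorm_sq)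
  have P1: "num_range 3 (Atilde q12 q13) =
           (\<Union>d\<in>{0..1::real}. qdisc (quat_of_real d) (sqrt (k * d * (1 - d))))"
  proof (rule set_eqI, rule iffI)
    fix q assume "q \<in> num_range 3 (Atilde q12 q13)"
    then obtain x :: "nat \<Rightarrow> quat" where q: "q = (\<Sum>i<3. \<Sum>j<3. qcnj (x i) * Atilde q12 q13 i j * x j)"
      and n: "(\<Sum>i<3. qcnj (x i) * x i) = 1"
      unfolding num_range_def by blast
    have n': "nsq (x 0) + nsq (x 1) + nsq (x 2) = 1" using n unfolding N_eq qr_eq_1 .
    define d where "d = nsq (x 1) + nsq (x 2)"
    have d01: "d \<in> {0..1}" unfolding d_def using n' nsq_nonneg[of "x 0"] nsq_nonneg[of "x 1"] nsq_nonneg[of "x 2"] by simp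
    have "qnorm (q - quat_of_real d) \<le> sqrt (k * d * (1 - d))"
      unfolding q S_eq d_def using fwd[OF k n'] .
    thus "q \<in> (\<Union>d\<in>{0..1::real}. qdisc (quat_of_real d) (sqrt (k * d * (1 - d))))"
      using d01 unfolding qdisc_def by blast
  next
    fix q assume "q \<in> (\<Union>d\<in>{0..1::real}. qdisc (quat_of_real d) (sqrt (k * d * (1 - d))))"
    then obtain d where d: "0 \<le> d" "d \<le> 1" and qd: "qnorm (q - quat_of_real d) \<le> sqrt (k * d * (1 - d))"
      unfolding qdisc_def by auto
    obtain x :: "nat \<Rightarrow> quat" where x: "nsq (x 0) + nsq (x 1) + nsq (x 2) = 1"
      "q = qcnj (x 0) * (q12 * x 1 + q13 * x 2) + quat_of_real (nsq (x 1) + nsq (x 2))"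
      using bwd[OF k kpos d qd] by blast
    have "q = (\<Sum>i<3. \<Sum>j<3. qcnj (x i) * Atilde q12 q13 i j * x j)" unfolding S_eq using x(2) .
    moreover have "(\<Sum>i<3. qcnj (x i) * x i) = 1" unfolding N_eq qr_eq_1 using x(1) .
    ultimately show "q \<in> num_range 3 (Atilde q12 q13)" unfolding num_range_def by blast
  qed
  have P2: "num_range 3 (Atilde q12 q13) \<inter> range quat_of_complex =
           quat_of_complex ` (\<Union>d\<in>{0..1::real}. cdisc (complex_of_real d) (sqrt (k * d * (1 - d))))"
  proof
    show "num_range 3 (Atilde q12 q13) \<inter> range quat_of_complex \<subseteq>
           quat_of_complex ` (\<Union>d\<in>{0..1::real}. cdisc (complex_of_real d) (sqrt (k * d * (1 - d))))"
    proof
      fix q assume "q \<in> num_range 3 (Atilde q12 q13) \<inter> range quat_of_complex"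
      then obtain z d where z: "q = quat_of_complex z" and d: "d \<in> {0..1}"
        and qd: "qnorm (q - quat_of_real d) \<le> sqrt (k * d * (1 - d))"
        unfolding P1 qdisc_def by blast
      have "z \<in> cdisc (complex_of_real d) (sqrt (k * d * (1 - d)))"
        using qd unfolding z qnorm_qoc cdisc_def by simp
      thus "q \<in> quat_of_complex ` (\<Union>d\<in>{0..1::real}. cdisc (complex_of_real d) (sqrt (k * d * (1 - d))))"
        using d z by blast
    qed
    show "quat_of_complex ` (\<Union>d\<in>{0..1::real}. cdisc (complex_of_real d) (sqrt (k * d * (1 - d))))
          \<subseteq> num_range 3 (Atilde q12 q13) \<inter> range quat_of_complex"
    proof
      fix q assume "q \<in> quat_of_complex ` (\<Union>d\<in>{0..1::real}. cdisc (complex_of_real d) (sqrt (k * d * (1 - d))))"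
      then obtain z d where z: "q = quat_of_complex z" and d: "d \<in> {0..1}"
        and zd: "z \<in> cdisc (complex_of_real d) (sqrt (k * d * (1 - d)))"
        by blast
      have "q \<in> qdisc (quat_of_real d) (sqrt (k * d * (1 - d)))"
        using zd unfolding z qdisc_def cdisc_def by (simp add: qnorm_qoc)
      thus "q \<in> num_range 3 (Atilde q12 q13) \<inter> range quat_of_complex"
        unfolding P1 using d z by blast
    qed
  qed
  have P3: "(\<Union>d\<in>{0..1::real}. cdisc (complex_of_real d) (sqrt (k * d * (1 - d)))) =
           {Complex x y | x y. (x - 1/2)\<^sup>2 / ((k + 1) / 4) + y\<^sup>2 / (k / 4) \<le> 1}"
  proof (rule set_eqI)
    fix z :: complex
    have "z \<in> (\<Union>d\<in>{0..1::real}. cdisc (complex_of_real d) (sqrt (k * d * (1 - d))))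
       \<longleftrightarrow> (\<exists>d\<in>{0..1}. (Re z - d)\<^sup>2 + (Im z)\<^sup>2 \<le> k * d * (1 - d))"
      using cdisc_iff[OF kpos] by auto
    also have "\<dots> \<longleftrightarrow> (Re z - 1/2)\<^sup>2 / ((k + 1) / 4) + (Im z)\<^sup>2 / (k / 4) \<le> 1"
      by (rule ell[OF kpos])
    also have "\<dots> \<longleftrightarrow> z \<in> {Complex x y | x y. (x - 1/2)\<^sup>2 / ((k + 1) / 4) + y\<^sup>2 / (k / 4) \<le> 1}"
      by (cases z) auto
    finally show "z \<in> (\<Union>d\<in>{0..1::real}. cdisc (complex_of_real d) (sqrt (k * d * (1 - d)))) \<longleftrightarrow>
       z \<in> {Complex x y | x y. (x - 1/2)\<^sup>2 / ((k + 1) / 4) + y\<^sup>2 / (k / 4) \<le> 1}" .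
  qed
  show ?thesis using P1 P2 P3 by blast
qed

end
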